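(* Fix real parameters $A,B$ (the conserved momenta $p_\psi,p_\phi$ of the Lagrange top) and consider the reduced phase space with canonical coordinates $(\theta,p_\theta)$, $\theta\in(0,\pi)$, $\{\theta,p_\theta\}=1$, and the Hamiltonian $$H(\theta,p_\theta)=p_\theta^2+\frac{A^2+2AB\cos\theta+B^2}{\sin^2\theta}+\cos\theta .$$ Put $u=\cos\theta$, $v=\sin\theta\,p_\theta$, and for $E\in\mathbb R$ let $X_E$ be the elliptic curve $$X_E:\ y^2=f_E(x),\qquad f_E(x)=x^3-Ex^2-(1+2AB)x+E-A^2-B^2 ,$$ with its group law whose neutral element is the point at infinity (three affine points sum to zero iff they are collinear, and $-(x,y)=(x,-y)$). Then $P=(u,v)$ lies on $X_{H(\theta,p_\theta)}$. Define a point $(\tilde u,\tilde v)\in X_{H(\theta,p_\theta)}$ in one of three ways: 1. (addition) $(\tilde u,\tilde v)=P+P'$, where $P'=(\lambda,\mu)$, $\lambda$ is a fixed real parameter and $\mu=\mu(\theta,p_\theta)$ is a (locally smooth) branch of $\sqrt{f_{H(\theta,p_\theta)}(\lambda)}$; explicitly, with $m=(v-\mu)/(u-\lambda)$ and $H=H(\theta,p_\theta)$, $$\tilde u=-u-\lambda+H+m^2,\qquad \tilde v=-v-m(\tilde u-u);$$ 2. (doubling) $(\tilde u,\tilde v)=[2]P$; explicitly, with $m=\dfrac{3u^2-2Hu-1-2AB}{2v}$, $$\tilde u=-2u+H+m^2,\qquad \tilde v=-v-m(\tilde u-u);$$ 3. (tripling) $(\tilde u,\tilde v)=[3]P$. Define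 $(\tilde\theta,\tilde p_\theta)$ by $\cos\tilde\theta=\tilde u$, $\sin\tilde\theta\,\tilde p_\theta=\tilde v$ (on the open set where these are defined and $|\tilde u|<1$). Then the map $(\theta,p_\theta)\mapsto(\tilde\theta,\tilde p_\theta)$ is a canonical transformation of valence $c$, i.e. $\{\tilde\theta,\tilde p_\theta\}=c$, with $c=1,2,3$ in cases 1, 2, 3 respectively, and it preserves the Hamiltonian: $H(\tilde\theta,\tilde p_\theta)=H(\theta,p_\theta)$ (so it is an auto-Bäcklund transformation of the Lagrange top).
   Context: A canonical transformation of valence $c$ is a map $(q,p)\mapsto(\tilde q,\tilde p)$ whose Jacobian matrix $V$ satisfies $V^\top\Omega V=c\,\Omega$ with $\Omega=\begin{pmatrix}0&I\\-I&0\end{pmatrix}$; equivalently the canonical Poisson brackets of the new variables are $c$ times the canonical ones. An auto-Bäcklund transformation (in the Toda–Wadati sense) is a canonical transformation preserving the form of the Hamiltonian(s). The full Lagrange top Hamiltonian in Euler angles is $p_\theta^2+\frac{p_\phi^2+2\cos\theta\,p_\phi p_\psi+p_\psi^2}{\sin^2\theta}+\cos\theta$, with $A=p_\psi$, $B=p_\phi$ conserved. *)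

theory Defs
  imports "HOL-Analysis.Analysis"
begin

definition Hred :: "real \<Rightarrow> real \<Rightarrow> real \<times> real \<Rightarrow> real" where
  "Hred A B z = (snd z)\<^sup>2 + (A\<^sup>2 + 2*A*B*cos (fst z) + B\<^sup>2) / (sin (fst z))\<^sup>2 + cos (fst z)"

definition fE :: "real \<Rightarrow> real \<Rightarrow> real \<Rightarrow> real \<Rightarrow> real" where
  "fE A B E x = x^3 - E*x\<^sup>2 - (1 + 2*A*B)*x + E - A\<^sup>2 - B\<^sup>2"

definition on_curve :: "real \<Rightarrow> real \<Rightarrow> real \<Rightarrow> real \<times> real \<Rightarrow> bool" where
  "on_curve A B E P \<longleftrightarrow> (snd P)\<^sup>2 = fE A B E (fst P)"

text \<open>The x^2-coefficient of f_E is -E, so the three collinear abscissae sum to E.\<close>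
definition ec_add :: "real \<Rightarrow> real \<times> real \<Rightarrow> real \<times> real \<Rightarrow> real \<times> real" where
  "ec_add E P Q = (let m = (snd P - snd Q) / (fst P - fst Q);
                       x3 = - fst P - fst Q + E + m\<^sup>2
                   in (x3, - snd P - m * (x3 - fst P)))"

definition ec_double :: "real \<Rightarrow> real \<Rightarrow> real \<Rightarrow> real \<times> real \<Rightarrow> real \<times> real" where
  "ec_double A B E P = (let m = (3 * (fst P)\<^sup>2 - 2 * E * fst P - 1 - 2*A*B) / (2 * snd P);
                           x3 = - 2 * fst P + E + m\<^sup>2
                       in (x3, - snd P - m * (x3 - fst P)))"

definition ec_triple :: "real \<Rightarrow> real \<Rightarrow> real \<Rightarrow> real \<times> real \<Rightarrow> real \<times> real" where
  "ec_triple A B E P = ec_add E P (ec_double A B E P)"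

definition to_uv :: "real \<times> real \<Rightarrow> real \<times> real" where
  "to_uv z = (cos (fst z), sin (fst z) * snd z)"

definition from_uv :: "real \<times> real \<Rightarrow> real \<times> real" where
  "from_uv w = (arccos (fst w), snd w / sin (arccos (fst w)))"

definition poisson :: "(real \<times> real \<Rightarrow> real) \<Rightarrow> (real \<times> real \<Rightarrow> real) \<Rightarrow> real \<times> real \<Rightarrow> real" where
  "poisson F G z =
     frechet_derivative F (at z) (1, 0) * frechet_derivative G (at z) (0, 1)
   - frechet_derivative F (at z) (0, 1) * frechet_derivative G (at z) (1, 0)"

definition canonical_valence :: "real \<Rightarrow> (real \<times> real \<Rightarrow> real \<times> real) \<Rightarrow> (real \<times> real) set \<Rightarrow> bool" where
  "canonical_valence c T U \<longleftrightarrow>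
     (\<forall>z\<in>U. T differentiable (at z) \<and> poisson (\<lambda>w. fst (T w)) (\<lambda>w. snd (T w)) z = c)"

end

theory Submission
  imports Defs
begin

definition HD :: "(real\<times>real \<Rightarrow> real) \<Rightarrow> real \<Rightarrow> real \<Rightarrow> real\<times>real \<Rightarrow> bool" where
  "HD f a b z \<longleftrightarrow> (f has_derivative (\<lambda>h. a * fst h + b * snd h)) (at z)"

lemma HD_cong: "HD f a b z \<Longrightarrow> a = a' \<Longrightarrow> b = b' \<Longrightarrow> HD f a' b' z" by simp

lemma HD_fst: "HD (\<lambda>z. fst z) 1 0 z"
  unfolding HD_def by (rule derivative_eq_intros | simp)+
lemma HD_snd: "HD (\<lambda>z. snd z) 0 1 z"
  unfolding HD_def by (rule derivative_eq_intros | simp)+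
lemma HD_const: "HD (\<lambda>z. c) 0 0 z"
  unfolding HD_def by (rule derivative_eq_intros | simp)+

lemma HD_add: "HD f a1 a2 z \<Longrightarrow> HD g b1 b2 z \<Longrightarrow> HD (\<lambda>z. f z + g z) (a1+b1) (a2+b2) z"
  unfolding HD_def by (drule (1) has_derivative_add) (simp add: algebra_simps)
lemma HD_diff: "HD f a1 a2 z \<Longrightarrow> HD g b1 b2 z \<Longrightarrow> HD (\<lambda>z. f z - g z) (a1-b1) (a2-b2) z"
  unfolding HD_def by (drule (1) has_derivative_diff) (simp add: algebra_simps)
lemma HD_minus: "HD f a1 a2 z \<Longrightarrow> HD (\<lambda>z. - f z) (-a1) (-a2) z"
  unfolding HD_def by (drule has_derivative_minus) (simp add: algebra_simps)
lemma HD_mult: "HD f a1 a2 z \<Longrightarrow> HD g b1 b2 z \<Longrightarrow>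
   HD (\<lambda>z. f z * g z) (a1 * g z + f z * b1) (a2 * g z + f z * b2) z"
  unfolding HD_def by (drule (1) has_derivative_mult) (simp add: algebra_simps)
lemma HD_divide: "HD f a1 a2 z \<Longrightarrow> HD g b1 b2 z \<Longrightarrow> g z \<noteq> 0 \<Longrightarrow>
   HD (\<lambda>z. f z / g z) ((a1 - f z / g z * b1) / g z) ((a2 - f z / g z * b2) / g z) z"
  unfolding HD_def
  apply (drule (1) has_derivative_divide, assumption)
  apply (erule has_derivative_eq_rhs)
  apply (rule ext) apply (simp add: field_simps)
  done
lemma HD_pow2: "HD f a1 a2 z \<Longrightarrow> HD (\<lambda>z. (f z)\<^sup>2) (2 * f z * a1) (2 * f z * a2) z"
proof -
  assume h: "HD f a1 a2 z"
  from HD_mult[OF h h] show ?thesis by (simp add: power2_eq_square algebra_simps)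
qed
lemma HD_comp: "HD f a1 a2 z \<Longrightarrow> (g has_real_derivative d) (at (f z)) \<Longrightarrow>
   HD (\<lambda>z. g (f z)) (d * a1) (d * a2) z"
  unfolding HD_def
  apply (drule DERIV_compose_FDERIV[where s=UNIV, rotated])
  apply assumption
  by (simp add: algebra_simps)

lemma HD_unique: "HD f a1 a2 z \<Longrightarrow> HD f b1 b2 z \<Longrightarrow> a1 = b1 \<and> a2 = b2"
  unfolding HD_def
proof -
  assume h1: "(f has_derivative (\<lambda>h. a1 * fst h + a2 * snd h)) (at z)"
    and h2: "(f has_derivative (\<lambda>h. b1 * fst h + b2 * snd h)) (at z)"
  have e: "(\<lambda>h. a1 * fst h + a2 * snd h) = (\<lambda>h::real\<times>real. b1 * fst h + b2 * snd h)"
    using has_derivative_unique[OF h1 h2] .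
  from fun_cong[OF e, of "(1,0)"] fun_cong[OF e, of "(0,1)"] show ?thesis by simp
qed

lemma HD_transform: "HD f a1 a2 z \<Longrightarrow> open U \<Longrightarrow> z \<in> U \<Longrightarrow> (\<And>w. w \<in> U \<Longrightarrow> f w = g w) \<Longrightarrow> HD g a1 a2 z"
  unfolding HD_def by (rule has_derivative_transform_within_open)

lemma HD_eq_on_open: "HD f a1 a2 z \<Longrightarrow> HD g b1 b2 z \<Longrightarrow> open U \<Longrightarrow> z \<in> U \<Longrightarrow>
   (\<And>w. w \<in> U \<Longrightarrow> f w = g w) \<Longrightarrow> a1 = b1 \<and> a2 = b2"
  by (metis HD_unique HD_transform)

definition dfE :: "real \<Rightarrow> real \<Rightarrow> real \<Rightarrow> real \<Rightarrow> real" where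
  "dfE A B E x = 3* x^2 - 2* E* x - (1 + 2* A* B)"

lemma line_id:
  fixes u x v m E A B :: real
  assumes cu: "v\<^sup>2 = fE A B E u" and cx: "(v - m*(u-x))\<^sup>2 = fE A B E x" and w: "u \<noteq> x"
  shows "dfE A B E u - 2* m* v = (u-x)*(u - (- u - x + E + m\<^sup>2))"
proof -
  have "(u-x) * (dfE A B E u - 2* m* v - (u-x)*(u - (- u - x + E + m\<^sup>2)))
        = (fE A B E u - v\<^sup>2) - (fE A B E x - (v - m*(u-x))\<^sup>2)"
    unfolding fE_def dfE_def by algebra
  also have "\<dots> = 0" using cu cx by simp
  finally show ?thesis using w by simp
qed

lemma add_wedge:
  fixes u x v y m t s E A B a b u1 u2 v1 v2 x1 x2 y1 y2 E1 E2 m1 m2 t1 t2 s1 s2 :: real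
  assumes w: "u \<noteq> x"
    and cu: "v\<^sup>2 = fE A B E u" and cx: "y\<^sup>2 = fE A B E x"
    and pu: "u1* E2 - u2* E1 = -2* a* v" and pv: "v1* E2 - v2* E1 = -a * dfE A B E u"
    and qx: "x1* E2 - x2* E1 = -2* b* y" and qy: "y1* E2 - y2* E1 = -b * dfE A B E x"
    and hy: "y = v - m*(u-x)"
    and hm1: "m1*(u-x) = v1 - y1 - m*(u1-x1)" and hm2: "m2*(u-x) = v2 - y2 - m*(u2-x2)"
    and ht: "t = -u - x + E + m\<^sup>2" and ht1: "t1 = -u1 - x1 + E1 + 2* m* m1" and ht2: "t2 = -u2 - x2 + E2 + 2* m* m2"
    and hs: "s = -v - m*(t-u)" and hs1: "s1 = -v1 - (m1*(t-u) + m*(t1-u1))"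
    and hs2: "s2 = -v2 - (m2*(t-u) + m*(t2-u2))"
  shows "t1* E2 - t2* E1 = -2*(a+b)* s" and "s1* E2 - s2* E1 = -(a+b) * dfE A B E t"
proof -
  have L1: "dfE A B E u - 2* m* v = (u-x)*(u-t)"
    using line_id[of v A B E u m x] cu cx w hy ht by simp
  have L2: "dfE A B E x - 2* m* y = (x-u)*(x-t)"
    using L1 hy ht unfolding dfE_def by algebra
  have L3: "dfE A B E t + 2* m* s = (t-u)*(t-x)"
    using L1 hs ht unfolding dfE_def by algebra
  have "(m1* E2 - m2* E1)*(u-x) = (v1* E2 - v2* E1) - (y1* E2-y2* E1) - m*((u1* E2-u2* E1) - (x1* E2 - x2* E1))"
    using hm1 hm2 by algebra
  also have "\<dots> = (u-x) * (a*(t-u) + b*(t-x))"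
    using pu pv qx qy L1 L2 by algebra
  finally have Wm: "m1* E2 - m2* E1 = a*(t-u) + b*(t-x)" using w by simp
  show T: "t1* E2 - t2* E1 = -2*(a+b)* s"
    using Wm pu qx ht1 ht2 hs hy by algebra
  show "s1* E2 - s2* E1 = -(a+b) * dfE A B E t"
    using Wm pu pv T hs1 hs2 hs L1 L3 by algebra
qed

lemma dbl_wedge:
  fixes u v m x y E A B u1 u2 v1 v2 E1 E2 N1 N2 m1 m2 x1 x2 y1 y2 :: real
  assumes v0: "v \<noteq> 0"
    and pu: "u1 * E2 - u2 * E1 = -2 * v" and pv: "v1 * E2 - v2 * E1 = - dfE A B E u"
    and hm: "m * (2 * v) = dfE A B E u"
    and hN1: "N1 = 6 * u * u1 - 2 * E1 * u - 2 * E * u1" and hN2: "N2 = 6 * u * u2 - 2 * E2 * u - 2 * E * u2"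
    and hm1: "m1 * (2 * v) = N1 - m * (2 * v1)" and hm2: "m2 * (2 * v) = N2 - m * (2 * v2)"
    and hx: "x = -2 * u + E + m\<^sup>2" and hx1: "x1 = -2 * u1 + E1 + 2 * m * m1" and hx2: "x2 = -2 * u2 + E2 + 2 * m * m2"
    and hy: "y = - v - m * (x - u)" and hy1: "y1 = - v1 - (m1 * (x - u) + m * (x1 - u1))"
    and hy2: "y2 = - v2 - (m2 * (x - u) + m * (x2 - u2))"
  shows "x1 * E2 - x2 * E1 = -2 * 2 * y" and "y1 * E2 - y2 * E1 = -2 * dfE A B E x"
proof -
  have "(m1 * E2 - m2 * E1) * (2 * v) = (N1 * E2 - N2 * E1) - 2 * m * (v1 * E2 - v2 * E1)"
    using hm1 hm2 by algebra
  also have "\<dots> = (2 * v) * (2 * m\<^sup>2 - (6 * u - 2 * E))"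
    using hN1 hN2 pu pv hm by algebra
  finally have Wm: "m1 * E2 - m2 * E1 = 2 * m\<^sup>2 - (6 * u - 2 * E)" using v0 by simp
  show T: "x1 * E2 - x2 * E1 = -2 * 2 * y"
    using Wm pu hx1 hx2 hy hx by algebra
  show "y1 * E2 - y2 * E1 = -2 * dfE A B E x"
    using Wm pu pv T hy1 hy2 hy hx hm unfolding dfE_def by algebra
qed

lemma pluecker:
  fixes t s E A B c t1 t2 s1 s2 E1 E2 :: real
  assumes te: "t1 * E2 - t2 * E1 = -2 * c * s" and se: "s1 * E2 - s2 * E1 = - c * dfE A B E t"
    and c1: "2 * s * s1 = dfE A B E t * t1 + (1 - t\<^sup>2) * E1"
    and c2: "2 * s * s2 = dfE A B E t * t2 + (1 - t\<^sup>2) * E2"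
    and nz: "E1 \<noteq> 0 \<or> E2 \<noteq> 0"
  shows "t1 * s2 - t2 * s1 = - c * (1 - t\<^sup>2)"
proof -
  have "(t1 * s2 - t2 * s1) * E1 = (- c * (1 - t\<^sup>2)) * E1"
    using te se c1 c2 by algebra
  moreover have "(t1 * s2 - t2 * s1) * E2 = (- c * (1 - t\<^sup>2)) * E2"
    using te se c1 c2 by algebra
  ultimately show ?thesis using nz by (metis mult_cancel_right)
qed

lemma add1_wedge:
  fixes u v lam mu m k t s E A B u1 u2 v1 v2 E1 E2 mu1 mu2 m1 m2 t1 t2 s1 s2 :: real
  assumes w: "u \<noteq> lam" and mu0: "mu \<noteq> 0"
    and cu: "v\<^sup>2 = fE A B E u" and cl: "mu\<^sup>2 = fE A B E lam"
    and puv: "u1 * v2 - u2 * v1 = - (1 - u\<^sup>2)"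
    and pu: "u1 * E2 - u2 * E1 = -2 * v" and pv: "v1 * E2 - v2 * E1 = - dfE A B E u"
    and hmu1: "2 * mu * mu1 = (1 - lam\<^sup>2) * E1" and hmu2: "2 * mu * mu2 = (1 - lam\<^sup>2) * E2"
    and hmm: "m * (u - lam) = v - mu"
    and hm1: "m1 * (u - lam) = v1 - mu1 - m * u1" and hm2: "m2 * (u - lam) = v2 - mu2 - m * u2"
    and ht: "t = - u - lam + E + m\<^sup>2" and ht1: "t1 = - u1 + E1 + 2 * m * m1" and ht2: "t2 = - u2 + E2 + 2 * m * m2"
    and hs: "s = - v - m * (t - u)" and hs1: "s1 = - v1 - (m1 * (t - u) + m * (t1 - u1))"
    and hs2: "s2 = - v2 - (m2 * (t - u) + m * (t2 - u2))"
  shows "t1 * s2 - t2 * s1 = - (1 - t\<^sup>2)"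
proof -
  define k where "k = (1 - lam\<^sup>2) / (2 * mu)"
  have k1: "mu1 = k * E1" using hmu1 mu0 unfolding k_def by (simp add: field_simps)
  have k2: "mu2 = k * E2" using hmu2 mu0 unfolding k_def by (simp add: field_simps)
  have kk: "k * (2 * mu) = 1 - lam\<^sup>2" using mu0 unfolding k_def by simp
  have hv: "mu = v - m * (u - lam)" using hmm by simp
  have L1: "dfE A B E u - 2 * m * v = (u - lam) * (u - t)"
    using line_id[of v A B E u m lam] cu cl hv w ht by simp
  have Wmu: "(m1 * u2 - m2 * u1) * (u - lam) = (1 - u\<^sup>2) - 2 * k * v"
    using hm1 hm2 k1 k2 puv pu by algebra
  have Wmv: "(m1 * v2 - m2 * v1) * (u - lam) = - k * dfE A B E u + m * (1 - u\<^sup>2)"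
    using hm1 hm2 k1 k2 puv pv by algebra
  have "(m1 * E2 - m2 * E1) * (u - lam) = (u - lam) * (t - u)"
    using hm1 hm2 k1 k2 pu pv L1 by algebra
  then have Wme: "m1 * E2 - m2 * E1 = t - u" using w by simp
  have "(t1 * s2 - t2 * s1) * (u - lam) = (- (1 - t\<^sup>2)) * (u - lam)"
    using Wmu Wmv Wme puv pu pv L1 kk hv ht ht1 ht2 hs1 hs2 by algebra
  then show ?thesis using w by simp
qed

lemma HD_cosfst: "HD (\<lambda>w. cos (fst w)) (- sin (fst z)) 0 z"
  using HD_comp[OF HD_fst[of z] DERIV_cos[of "fst z"]] by simp
lemma HD_sinfst: "HD (\<lambda>w. sin (fst w)) (cos (fst z)) 0 z"
  using HD_comp[OF HD_fst[of z] DERIV_sin[of "fst z"]] by simp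

lemma HD_v: "HD (\<lambda>w. sin (fst w) * snd w) (cos (fst z) * snd z) (sin (fst z)) z"
  using HD_mult[OF HD_sinfst HD_snd, of z] by simp

lemma HD_Hred:
  assumes s: "sin (fst z) \<noteq> 0"
  shows "\<exists>e1. HD (Hred A B) e1 (2 * snd z) z \<and>
     cos (fst z) * snd z * (2 * snd z) - sin (fst z) * e1 = - dfE A B (Hred A B z) (cos (fst z))"
proof -
  let ?N = "\<lambda>w. A\<^sup>2 + 2*A*B*cos (fst w) + B\<^sup>2"
  have hN: "HD ?N (2*A*B*(- sin (fst z))) 0 z"
    using HD_add[OF HD_add[OF HD_const[of "A\<^sup>2" z] HD_mult[OF HD_const[of "2*A*B" z] HD_cosfst]] HD_const[of "B\<^sup>2" z]]
    by simp
  have hS: "HD (\<lambda>w. (sin (fst w))\<^sup>2) (2 * sin (fst z) * cos (fst z)) 0 z"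
    using HD_pow2[OF HD_sinfst] by simp
  note hQ = HD_divide[OF hN hS] 
  have s2: "(sin (fst z))\<^sup>2 \<noteq> 0" using s by simp
  note hH = HD_add[OF HD_add[OF HD_pow2[OF HD_snd] hQ[OF s2]] HD_cosfst]
  have e: "Hred A B = (\<lambda>w. (snd w)\<^sup>2 + ?N w / (sin (fst w))\<^sup>2 + cos (fst w))"
    unfolding Hred_def by auto
  define e1 where "e1 = 2 * snd z * 0 + (2 * A * B * - sin (fst z) - ?N z / (sin (fst z))\<^sup>2 * (2 * sin (fst z) * cos (fst z))) / (sin (fst z))\<^sup>2 + - sin (fst z)"
  have H1: "HD (Hred A B) e1 (2 * snd z) z"
    unfolding e e1_def by (rule HD_cong[OF hH]) simp_all
  have cs: "(sin (fst z))\<^sup>2 = 1 - (cos (fst z))\<^sup>2" by (simp add: sin_squared_eq)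
  have "cos (fst z) * snd z * (2 * snd z) - sin (fst z) * e1 = - dfE A B (Hred A B z) (cos (fst z))"
  proof -
    have key: "\<And>c s p. s \<noteq> 0 \<Longrightarrow> s\<^sup>2 = 1 - c\<^sup>2 \<Longrightarrow>
      c * p * (2 * p) - s * (2 * p * 0 + (2 * A * B * - s - (A\<^sup>2 + 2*A*B*c + B\<^sup>2) / s\<^sup>2 * (2 * s * c)) / s\<^sup>2 + - s)
      = - (3 * c ^ 2 - 2 * (p\<^sup>2 + (A\<^sup>2 + 2*A*B*c + B\<^sup>2) / s\<^sup>2 + c) * c - (1 + 2 * A * B))"
    proof -
      fix c s p :: real assume "s \<noteq> 0" "s\<^sup>2 = 1 - c\<^sup>2"
      then show "?thesis c s p" by (simp add: field_simps) algebra
    qed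
    show ?thesis unfolding e1_def dfE_def Hred_def using key[OF s cs] by simp
  qed
  with H1 show ?thesis by blast
qed

lemma base_on_curve:
  assumes s: "sin (fst z) \<noteq> 0"
  shows "on_curve A B (Hred A B z) (to_uv z)"
proof -
  have key: "\<And>c s p. s \<noteq> 0 \<Longrightarrow> s\<^sup>2 = 1 - c\<^sup>2 \<Longrightarrow>
     (s * p)\<^sup>2 = fE A B (p\<^sup>2 + (A\<^sup>2 + 2*A*B*c + B\<^sup>2) / s\<^sup>2 + c) c"
  proof -
    fix c s p :: real assume "s \<noteq> 0" "s\<^sup>2 = 1 - c\<^sup>2"
    then show "?thesis c s p" unfolding fE_def by (simp add: field_simps) algebra
  qed
  show ?thesis unfolding on_curve_def to_uv_def Hred_def
    using key[OF s, of "cos (fst z)" "snd z"] by (simp add: sin_squared_eq)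
qed

lemma Hred_from_uv:
  assumes c: "on_curve A B E (t, s)" and t: "\<bar>t\<bar> < 1"
  shows "Hred A B (from_uv (t, s)) = E"
proof -
  have S: "sin (arccos t) = sqrt (1 - t\<^sup>2)" using t by (simp add: sin_arccos_abs)
  have pos: "1 - t\<^sup>2 > 0" using t by (simp add: abs_square_less_1)
  have S2: "(sqrt (1 - t\<^sup>2))\<^sup>2 = 1 - t\<^sup>2" using pos by simp
  have C: "cos (arccos t) = t" using t by (simp add: cos_arccos_abs)
  have cs: "s\<^sup>2 = t^3 - E*t\<^sup>2 - (1 + 2*A*B)*t + E - A\<^sup>2 - B\<^sup>2" using c unfolding on_curve_def fE_def by simp
  have k: "s\<^sup>2 + (A\<^sup>2 + 2*A*B*t + B\<^sup>2) = (E - t) * (1 - t\<^sup>2)" using cs by algebra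
  have "Hred A B (from_uv (t, s)) = (s\<^sup>2 + (A\<^sup>2 + 2*A*B*t + B\<^sup>2)) / (1 - t\<^sup>2) + t"
    unfolding Hred_def from_uv_def using S C S2 by (simp add: power_divide add_divide_distrib)
  also have "\<dots> = E" unfolding k using pos by simp
  finally show ?thesis .
qed

lemma ec_add_on_curve:
  assumes cP: "on_curve A B E P" and cQ: "on_curve A B E Q" and d: "fst P \<noteq> fst Q"
  shows "on_curve A B E (ec_add E P Q)"
proof -
  obtain u v where P: "P = (u, v)" by force
  obtain x y where Q: "Q = (x, y)" by force
  define m where "m = (v - y) / (u - x)"
  have w: "u - x \<noteq> 0" using d P Q by simp
  have hy: "y = v - m * (u - x)" unfolding m_def using w by simp
  have cu: "v\<^sup>2 = fE A B E u" using cP P unfolding on_curve_def by simp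
  have cx: "(v - m * (u - x))\<^sup>2 = fE A B E x" using cQ Q hy unfolding on_curve_def by simp
  define t where "t = - u - x + E + m\<^sup>2"
  have "(x - u) * (fE A B E t - (v + m * (t - u))\<^sup>2)
      = (x - t) * (fE A B E u - v\<^sup>2) + (t - u) * (fE A B E x - (v - m * (u - x))\<^sup>2)"
    unfolding fE_def t_def by algebra
  also have "\<dots> = 0" using cu cx by simp
  finally have "fE A B E t = (v + m * (t - u))\<^sup>2" using w by simp
  moreover have "ec_add E P Q = (t, - v - m * (t - u))"
    unfolding ec_add_def P Q Let_def m_def t_def by simp
  ultimately show ?thesis unfolding on_curve_def by (simp add: power2_eq_square algebra_simps)
qed

lemma ec_double_on_curve:
  assumes cP: "on_curve A B E P" and d: "snd P \<noteq> 0"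
  shows "on_curve A B E (ec_double A B E P)"
proof -
  obtain u v where P: "P = (u, v)" by force
  define m where "m = (3 * u\<^sup>2 - 2 * E * u - 1 - 2*A*B) / (2 * v)"
  have v0: "v \<noteq> 0" using d P by simp
  have hm: "m * (2 * v) = 3 * u\<^sup>2 - 2 * E * u - 1 - 2*A*B" unfolding m_def using v0 by simp
  have cu: "v\<^sup>2 = fE A B E u" using cP P unfolding on_curve_def by simp
  define t where "t = - 2 * u + E + m\<^sup>2"
  have "fE A B E t - (v + m * (t - u))\<^sup>2
      = (fE A B E u - v\<^sup>2) + (t - u) * ((3 * u\<^sup>2 - 2 * E * u - 1 - 2*A*B) - 2 * m * v)"
    unfolding fE_def t_def by algebra
  also have "\<dots> = 0" using cu hm by (simp add: algebra_simps)
  finally have "fE A B E t = (v + m * (t - u))\<^sup>2" by simp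
  moreover have "ec_double A B E P = (t, - v - m * (t - u))"
    unfolding ec_double_def P Let_def m_def t_def by simp
  ultimately show ?thesis unfolding on_curve_def by (simp add: power2_eq_square algebra_simps)
qed

lemma HD_fE:
  assumes hE: "HD Ef e1 e2 z" and ht: "HD tf t1 t2 z"
  shows "HD (\<lambda>w. fE A B (Ef w) (tf w))
     (dfE A B (Ef z) (tf z) * t1 + (1 - (tf z)\<^sup>2) * e1)
     (dfE A B (Ef z) (tf z) * t2 + (1 - (tf z)\<^sup>2) * e2) z"
proof -
  have h3: "HD (\<lambda>w. (tf w)^3) (3 * (tf z)\<^sup>2 * t1) (3 * (tf z)\<^sup>2 * t2) z"
    using HD_mult[OF HD_pow2[OF ht] ht] by (simp add: power2_eq_square power3_eq_cube algebra_simps)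
  note h = HD_diff[OF HD_diff[OF HD_add[OF HD_diff[OF HD_diff[OF h3 HD_mult[OF hE HD_pow2[OF ht]]]
       HD_mult[OF HD_const[of "1 + 2*A*B" z] ht]] hE] HD_const[of "A\<^sup>2" z]] HD_const[of "B\<^sup>2" z]]
  show ?thesis unfolding fE_def dfE_def
    by (rule HD_cong[OF h]) (simp_all add: algebra_simps power2_eq_square)
qed

lemma HD_of_differentiable:
  assumes "f differentiable (at z)"
  shows "HD f (frechet_derivative f (at z) (1,0)) (frechet_derivative f (at z) (0,1)) z"
proof -
  let ?D = "frechet_derivative f (at z)"
  have hd: "(f has_derivative ?D) (at z)" using assms frechet_derivative_works by blast
  then have lin: "linear ?D" using has_derivative_linear by blast
  have "?D = (\<lambda>h. ?D (1,0) * fst h + ?D (0,1) * snd h)"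
  proof
    fix h :: "real \<times> real"
    have "h = fst h *\<^sub>R (1,0) + snd h *\<^sub>R (0,1)" by (cases h) simp
    then have "?D h = ?D (fst h *\<^sub>R (1,0) + snd h *\<^sub>R (0,1))" by simp
    also have "\<dots> = fst h * ?D (1,0) + snd h * ?D (0,1)"
      unfolding linear_add[OF lin] linear_scale[OF lin] by simp
    finally show "?D h = ?D (1,0) * fst h + ?D (0,1) * snd h" by simp
  qed
  with hd show ?thesis unfolding HD_def by simp
qed

lemma HD_frechet: "HD f a b z \<Longrightarrow> frechet_derivative f (at z) = (\<lambda>h. a * fst h + b * snd h)"
  unfolding HD_def by (rule frechet_derivative_at[symmetric])

lemma bracket:
  assumes ht: "HD (\<lambda>w. fst (G w)) t1 t2 z" and hs: "HD (\<lambda>w. snd (G w)) s1 s2 z"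
    and b: "\<bar>fst (G z)\<bar> < 1"
  shows "(\<lambda>w. from_uv (G w)) differentiable (at z) \<and>
    poisson (\<lambda>w. fst (from_uv (G w))) (\<lambda>w. snd (from_uv (G w))) z = - (t1 * s2 - t2 * s1) / (1 - (fst (G z))\<^sup>2)"
proof -
  define t where "t = fst (G z)"
  define S where "S = sqrt (1 - t\<^sup>2)"
  have pos: "1 - t\<^sup>2 > 0" using b unfolding t_def by (simp add: abs_square_less_1)
  have S2: "S\<^sup>2 = 1 - t\<^sup>2" unfolding S_def using pos by simp
  have Sp: "S > 0" unfolding S_def using pos by simp
  have tb: "- 1 < t" "t < 1" using b unfolding t_def by auto
  have sa: "sin (arccos t) = S" unfolding S_def using tb by (simp add: sin_arccos_abs)
  have ca: "cos (arccos t) = t" using tb by simp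
  note ha = HD_comp[OF ht DERIV_arccos[OF tb[unfolded t_def]]]
  note hsa = HD_comp[OF ha DERIV_sin]
  have nz: "sin (arccos (fst (G z))) \<noteq> 0" using sa Sp unfolding t_def by simp
  note hq = HD_divide[OF hs hsa nz]
  have e1: "(\<lambda>w. fst (from_uv (G w))) = (\<lambda>w. arccos (fst (G w)))" by (simp add: from_uv_def)
  have e2: "(\<lambda>w. snd (from_uv (G w))) = (\<lambda>w. snd (G w) / sin (arccos (fst (G w))))" by (simp add: from_uv_def)
  have e3: "(\<lambda>w. from_uv (G w)) = (\<lambda>w. (arccos (fst (G w)), snd (G w) / sin (arccos (fst (G w)))))"
    by (simp add: from_uv_def)
  have diff: "(\<lambda>w. from_uv (G w)) differentiable (at z)"
    unfolding e3 differentiable_def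
    using has_derivative_Pair[OF ha[unfolded HD_def] hq[unfolded HD_def]] by blast
  have "poisson (\<lambda>w. fst (from_uv (G w))) (\<lambda>w. snd (from_uv (G w))) z = - (t1 * s2 - t2 * s1) / S\<^sup>2"
    unfolding poisson_def e1 e2 HD_frechet[OF ha] HD_frechet[OF hq]
    unfolding t_def[symmetric] sa ca S_def[symmetric] using Sp
    by (simp add: field_simps power2_eq_square)
  with diff S2 show ?thesis unfolding t_def by simp
qed

lemma case1:
  fixes A B lam :: real and mu :: "real \<times> real \<Rightarrow> real" and U :: "(real \<times> real) set" and z :: "real \<times> real"
  assumes U: "open U" "z \<in> U" and th: "fst z \<in> {0<..<pi}"
    and hmuU: "\<forall>w\<in>U. (mu w)\<^sup>2 = fE A B (Hred A B w) lam"
    and mu0: "mu z \<noteq> 0" and dmu: "mu differentiable (at z)" and ul: "fst (to_uv z) \<noteq> lam"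
    and b: "\<bar>fst (ec_add (Hred A B z) (to_uv z) (lam, mu z))\<bar> < 1"
  shows "(\<lambda>w. from_uv (ec_add (Hred A B w) (to_uv w) (lam, mu w))) differentiable (at z) \<and>
    poisson (\<lambda>w. fst (from_uv (ec_add (Hred A B w) (to_uv w) (lam, mu w))))
            (\<lambda>w. snd (from_uv (ec_add (Hred A B w) (to_uv w) (lam, mu w)))) z = 1"
proof -
  define sn where "sn = sin (fst z)"
  define cn where "cn = cos (fst z)"
  define p where "p = snd z"
  define E where "E = Hred A B z"
  have snp: "sn > 0" unfolding sn_def using th by (auto intro: sin_gt_zero)
  have cs: "sn\<^sup>2 = 1 - cn\<^sup>2" unfolding sn_def cn_def by (simp add: sin_squared_eq)
  obtain e1 where hE: "HD (Hred A B) e1 (2 * snd z) z"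
    and pv: "cos (fst z) * snd z * (2 * snd z) - sin (fst z) * e1 = - dfE A B (Hred A B z) (cos (fst z))"
    using HD_Hred[of z A B] snp unfolding sn_def by auto
  note hu = HD_cosfst[of z] and hv = HD_v[of z]
  note hmu = HD_of_differentiable[OF dmu]
  define a1 where "a1 = frechet_derivative mu (at z) (1,0)"
  define a2 where "a2 = frechet_derivative mu (at z) (0,1)"
  have hmu': "HD mu a1 a2 z" using hmu unfolding a1_def a2_def .
  have murel: "2 * mu z * a1 = dfE A B (Hred A B z) lam * 0 + (1 - lam\<^sup>2) * e1
            \<and> 2 * mu z * a2 = dfE A B (Hred A B z) lam * 0 + (1 - lam\<^sup>2) * (2 * snd z)"
    using HD_eq_on_open[OF HD_pow2[OF hmu'] HD_fE[OF hE HD_const[of lam z]] U(1) U(2)] hmuU by auto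
  define mf where "mf w = (sin (fst w) * snd w - mu w) / (cos (fst w) - lam)" for w
  have nz: "cos (fst z) - lam \<noteq> 0" using ul unfolding to_uv_def by simp
  note hm0 = HD_divide[OF HD_diff[OF hv hmu'] HD_diff[OF hu HD_const[of lam z]] nz]
  define m where "m = mf z"
  define m1 where "m1 = ((cn * p - a1) - m * (- sn)) / (cn - lam)"
  define m2 where "m2 = ((sn - a2) - m * 0) / (cn - lam)"
  have hm: "HD mf m1 m2 z"
    by (rule HD_cong[OF hm0[folded mf_def]]) (simp_all add: m1_def m2_def m_def mf_def sn_def cn_def p_def)
  define tf where "tf w = - cos (fst w) - lam + Hred A B w + (mf w)\<^sup>2" for w
  define t where "t = tf z"
  define t1 where "t1 = - (- sn) + e1 + 2 * m * m1"
  define t2 where "t2 = - 0 + 2 * p + 2 * m * m2"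
  have ht: "HD tf t1 t2 z"
    unfolding tf_def
    by (rule HD_cong[OF HD_add[OF HD_add[OF HD_diff[OF HD_minus[OF hu] HD_const[of lam z]] hE] HD_pow2[OF hm]]])
       (simp_all add: t1_def t2_def m_def sn_def p_def)
  define sf where "sf w = - (sin (fst w) * snd w) - mf w * (tf w - cos (fst w))" for w
  define s where "s = sf z"
  define s1 where "s1 = - (cn * p) - (m1 * (t - cn) + m * (t1 - (- sn)))"
  define s2 where "s2 = - sn - (m2 * (t - cn) + m * (t2 - 0))"
  have hs: "HD sf s1 s2 z"
    unfolding sf_def
    by (rule HD_cong[OF HD_diff[OF HD_minus[OF hv] HD_mult[OF hm HD_diff[OF ht hu]]]])
       (simp_all add: s1_def s2_def m_def t_def sn_def cn_def p_def algebra_simps)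
  have eG: "ec_add (Hred A B w) (to_uv w) (lam, mu w) = (tf w, sf w)" for w
    unfolding ec_add_def Let_def to_uv_def tf_def sf_def mf_def by simp
  have ht': "HD (\<lambda>w. fst (ec_add (Hred A B w) (to_uv w) (lam, mu w))) t1 t2 z" unfolding eG using ht by simp
  have hs': "HD (\<lambda>w. snd (ec_add (Hred A B w) (to_uv w) (lam, mu w))) s1 s2 z" unfolding eG using hs by simp
  note br = bracket[OF ht' hs' b]
  have cu: "(sn * p)\<^sup>2 = fE A B E cn"
    using base_on_curve[of z A B] snp unfolding on_curve_def to_uv_def sn_def cn_def p_def E_def by simp
  have cmu: "(mu z)\<^sup>2 = fE A B E lam" using hmuU U(2) unfolding E_def by simp
  have W: "t1 * s2 - t2 * s1 = - (1 - t\<^sup>2)"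
  proof (rule add1_wedge[where u=cn and v="sn * p" and lam=lam and mu="mu z" and m=m and E=E and A=A and B=B
        and ?u1.0="- sn" and ?u2.0=0 and ?v1.0="cn * p" and ?v2.0=sn and ?E1.0=e1 and ?E2.0="2 * p" and ?mu1.0=a1 and ?mu2.0=a2
        and ?m1.0=m1 and ?m2.0=m2])
    show "cn \<noteq> lam" using nz unfolding cn_def by simp
    show "mu z \<noteq> 0" by (rule mu0)
    show "(sn * p)\<^sup>2 = fE A B E cn" by (rule cu)
    show "(mu z)\<^sup>2 = fE A B E lam" by (rule cmu)
    show "- sn * sn - 0 * (cn * p) = - (1 - cn\<^sup>2)" using cs by (simp add: power2_eq_square)
    show "- sn * (2 * p) - 0 * e1 = -2 * (sn * p)" by simp
    show "cn * p * (2 * p) - sn * e1 = - dfE A B E cn" using pv unfolding cn_def sn_def p_def E_def .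
    show "2 * mu z * a1 = (1 - lam\<^sup>2) * e1" "2 * mu z * a2 = (1 - lam\<^sup>2) * (2 * p)"
      using murel unfolding p_def by auto
    show "m * (cn - lam) = sn * p - mu z"
      unfolding m_def mf_def cn_def sn_def p_def using nz by simp
    show "m1 * (cn - lam) = cn * p - a1 - m * (- sn)" "m2 * (cn - lam) = sn - a2 - m * 0"
      unfolding m1_def m2_def using nz unfolding cn_def by simp_all
    show "t = - cn - lam + E + m\<^sup>2" unfolding t_def tf_def cn_def E_def m_def by simp
    show "t1 = - (- sn) + e1 + 2 * m * m1" "t2 = - 0 + 2 * p + 2 * m * m2" unfolding t1_def t2_def by simp_all
    show "s = - (sn * p) - m * (t - cn)" unfolding s_def sf_def t_def m_def sn_def cn_def p_def by simp
    show "s1 = - (cn * p) - (m1 * (t - cn) + m * (t1 - (- sn)))" unfolding s1_def ..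
    show "s2 = - sn - (m2 * (t - cn) + m * (t2 - 0))" unfolding s2_def ..
  qed
  have tt: "fst (ec_add (Hred A B z) (to_uv z) (lam, mu z)) = t" unfolding eG t_def by simp
  have pos: "1 - t\<^sup>2 > 0" using b unfolding tt by (simp add: abs_square_less_1)
  show ?thesis using br unfolding tt W using pos by simp
qed

lemma dbl_data:
  fixes A B :: real and z :: "real \<times> real"
  assumes th: "fst z \<in> {0<..<pi}" and v0: "snd (to_uv z) \<noteq> 0"
    and hE: "HD (Hred A B) e1 (2 * snd z) z"
    and pv: "cos (fst z) * snd z * (2 * snd z) - sin (fst z) * e1 = - dfE A B (Hred A B z) (cos (fst z))"
  shows "\<exists>x1 x2 y1 y2. HD (\<lambda>w. fst (ec_double A B (Hred A B w) (to_uv w))) x1 x2 z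
     \<and> HD (\<lambda>w. snd (ec_double A B (Hred A B w) (to_uv w))) y1 y2 z
     \<and> x1 * (2 * snd z) - x2 * e1 = -2 * 2 * snd (ec_double A B (Hred A B z) (to_uv z))
     \<and> y1 * (2 * snd z) - y2 * e1 = -2 * dfE A B (Hred A B z) (fst (ec_double A B (Hred A B z) (to_uv z)))"
proof -
  define sn where "sn = sin (fst z)"
  define cn where "cn = cos (fst z)"
  define p where "p = snd z"
  define E where "E = Hred A B z"
  have vz: "sn * p \<noteq> 0" using v0 unfolding to_uv_def sn_def p_def by simp
  note hu = HD_cosfst[of z] and hv = HD_v[of z]
  define Nf where "Nf w = 3 * (cos (fst w))\<^sup>2 - 2 * Hred A B w * cos (fst w) - 1 - 2 * A * B" for w
  define N1 where "N1 = 6 * cn * (- sn) - 2 * e1 * cn - 2 * E * (- sn)"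
  define N2 where "N2 = 6 * cn * 0 - 2 * (2 * p) * cn - 2 * E * 0"
  have hN: "HD Nf N1 N2 z"
    unfolding Nf_def
    by (rule HD_cong[OF HD_diff[OF HD_diff[OF HD_diff[OF HD_mult[OF HD_const[of 3 z] HD_pow2[OF hu]]
          HD_mult[OF HD_mult[OF HD_const[of 2 z] hE] hu]] HD_const[of 1 z]] HD_const[of "2 * A * B" z]]])
       (simp_all add: N1_def N2_def cn_def sn_def E_def p_def algebra_simps)
  define mf where "mf w = Nf w / (2 * (sin (fst w) * snd w))" for w
  have nz: "2 * (sin (fst z) * snd z) \<noteq> 0" using vz unfolding sn_def p_def by simp
  note hm0 = HD_divide[OF hN HD_mult[OF HD_const[of 2 z] hv] nz]
  define m where "m = mf z"
  define m1 where "m1 = (N1 - m * (2 * (cn * p))) / (2 * (sn * p))"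
  define m2 where "m2 = (N2 - m * (2 * sn)) / (2 * (sn * p))"
  have hm: "HD mf m1 m2 z"
    by (rule HD_cong[OF hm0[folded mf_def]]) (simp_all add: m1_def m2_def m_def mf_def sn_def cn_def p_def)
  define xf where "xf w = - 2 * cos (fst w) + Hred A B w + (mf w)\<^sup>2" for w
  define x where "x = xf z"
  define x1 where "x1 = -2 * (- sn) + e1 + 2 * m * m1"
  define x2 where "x2 = -2 * 0 + 2 * p + 2 * m * m2"
  have hx: "HD xf x1 x2 z"
    unfolding xf_def
    by (rule HD_cong[OF HD_add[OF HD_add[OF HD_mult[OF HD_const[of "-2" z] hu] hE] HD_pow2[OF hm]]])
       (simp_all add: x1_def x2_def m_def sn_def p_def)
  define yf where "yf w = - (sin (fst w) * snd w) - mf w * (xf w - cos (fst w))" for w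
  define y where "y = yf z"
  define y1 where "y1 = - (cn * p) - (m1 * (x - cn) + m * (x1 - (- sn)))"
  define y2 where "y2 = - sn - (m2 * (x - cn) + m * (x2 - 0))"
  have hy: "HD yf y1 y2 z"
    unfolding yf_def
    by (rule HD_cong[OF HD_diff[OF HD_minus[OF hv] HD_mult[OF hm HD_diff[OF hx hu]]]])
       (simp_all add: y1_def y2_def m_def x_def sn_def cn_def p_def algebra_simps)
  have eG: "ec_double A B (Hred A B w) (to_uv w) = (xf w, yf w)" for w
    unfolding ec_double_def Let_def to_uv_def xf_def yf_def mf_def Nf_def by (simp add: algebra_simps)
  have f1: "sn * p \<noteq> 0" by (rule vz)
  have f2: "- sn * (2 * p) - 0 * e1 = -2 * (sn * p)" by simp
  have f3: "cn * p * (2 * p) - sn * e1 = - dfE A B E cn" using pv unfolding cn_def sn_def p_def E_def .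
  have f4: "m * (2 * (sn * p)) = dfE A B E cn"
      unfolding m_def mf_def Nf_def dfE_def cn_def sn_def p_def E_def using nz by simp
  have f5: "N1 = 6 * cn * (- sn) - 2 * e1 * cn - 2 * E * (- sn)" unfolding N1_def ..
  have f6: "N2 = 6 * cn * 0 - 2 * (2 * p) * cn - 2 * E * 0" unfolding N2_def ..
  have f7: "m1 * (2 * (sn * p)) = N1 - m * (2 * (cn * p))" unfolding m1_def using vz by simp
  have f8: "m2 * (2 * (sn * p)) = N2 - m * (2 * sn)" unfolding m2_def using vz by simp
  have f9: "x = -2 * cn + E + m\<^sup>2" unfolding x_def xf_def cn_def E_def m_def by simp
  have f10: "x1 = -2 * (- sn) + e1 + 2 * m * m1" unfolding x1_def ..
  have f11: "x2 = -2 * 0 + 2 * p + 2 * m * m2" unfolding x2_def ..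
  have f12: "y = - (sn * p) - m * (x - cn)" unfolding y_def yf_def x_def m_def sn_def cn_def p_def by simp
  have f13: "y1 = - (cn * p) - (m1 * (x - cn) + m * (x1 - (- sn)))" unfolding y1_def ..
  have f14: "y2 = - sn - (m2 * (x - cn) + m * (x2 - 0))" unfolding y2_def ..
  note W = dbl_wedge[OF f1 f2 f3 f4 f5 f6 f7 f8 f9 f10 f11 f12 f13 f14]
  show ?thesis
    apply (rule exI[of _ x1], rule exI[of _ x2], rule exI[of _ y1], rule exI[of _ y2])
    unfolding eG using hx hy W unfolding x_def y_def p_def E_def by simp
qed

lemma hred_pres:
  assumes "on_curve A B E P" "\<bar>fst P\<bar> < 1"
  shows "Hred A B (from_uv P) = E"
  using Hred_from_uv[of A B E "fst P" "snd P"] assms by simp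

lemma sin_pos_U: "U \<subseteq> {0<..<pi} \<times> UNIV \<Longrightarrow> w \<in> U \<Longrightarrow> sin (fst w) \<noteq> 0"
proof -
  assume "U \<subseteq> {0<..<pi} \<times> UNIV" "w \<in> U"
  then have "0 < fst w" "fst w < pi" by auto
  then have "sin (fst w) > 0" by (rule sin_gt_zero)
  then show ?thesis by simp
qed

lemma case2:
  fixes A B :: real and U :: "(real \<times> real) set" and z :: "real \<times> real"
  assumes U: "open U" "z \<in> U" and sub: "U \<subseteq> {0<..<pi} \<times> UNIV"
    and hU: "\<forall>w\<in>U. snd (to_uv w) \<noteq> 0"
    and b: "\<bar>fst (ec_double A B (Hred A B z) (to_uv z))\<bar> < 1"
  shows "(\<lambda>w. from_uv (ec_double A B (Hred A B w) (to_uv w))) differentiable (at z) \<and>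
    poisson (\<lambda>w. fst (from_uv (ec_double A B (Hred A B w) (to_uv w))))
            (\<lambda>w. snd (from_uv (ec_double A B (Hred A B w) (to_uv w)))) z = 2"
proof -
  have th: "fst z \<in> {0<..<pi}" using sub U(2) by auto
  have snz: "sin (fst z) \<noteq> 0" using sin_pos_U[OF sub U(2)] .
  obtain e1 where hE: "HD (Hred A B) e1 (2 * snd z) z"
    and pv: "cos (fst z) * snd z * (2 * snd z) - sin (fst z) * e1 = - dfE A B (Hred A B z) (cos (fst z))"
    using HD_Hred[OF snz, of A B] by auto
  have v0: "snd (to_uv z) \<noteq> 0" using hU U(2) by auto
  obtain x1 x2 y1 y2 where hx: "HD (\<lambda>w. fst (ec_double A B (Hred A B w) (to_uv w))) x1 x2 z"
     and hy: "HD (\<lambda>w. snd (ec_double A B (Hred A B w) (to_uv w))) y1 y2 z"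
     and te: "x1 * (2 * snd z) - x2 * e1 = -2 * 2 * snd (ec_double A B (Hred A B z) (to_uv z))"
     and se: "y1 * (2 * snd z) - y2 * e1 = -2 * dfE A B (Hred A B z) (fst (ec_double A B (Hred A B z) (to_uv z)))"
    using dbl_data[OF th v0 hE pv] by blast
  have curve: "(snd (ec_double A B (Hred A B w) (to_uv w)))\<^sup>2
       = fE A B (Hred A B w) (fst (ec_double A B (Hred A B w) (to_uv w)))" if "w \<in> U" for w
    using ec_double_on_curve[OF base_on_curve[OF sin_pos_U[OF sub that]], of A B] hU that
    unfolding on_curve_def by auto
  have cd: "2 * snd (ec_double A B (Hred A B z) (to_uv z)) * y1
       = dfE A B (Hred A B z) (fst (ec_double A B (Hred A B z) (to_uv z))) * x1 + (1 - (fst (ec_double A B (Hred A B z) (to_uv z)))\<^sup>2) * e1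
     \<and> 2 * snd (ec_double A B (Hred A B z) (to_uv z)) * y2
       = dfE A B (Hred A B z) (fst (ec_double A B (Hred A B z) (to_uv z))) * x2 + (1 - (fst (ec_double A B (Hred A B z) (to_uv z)))\<^sup>2) * (2 * snd z)"
    using HD_eq_on_open[OF HD_pow2[OF hy] HD_fE[OF hE hx] U(1) U(2)] curve by auto
  have nz: "e1 \<noteq> 0 \<or> 2 * snd z \<noteq> 0" using v0 unfolding to_uv_def by auto
  note W = pluecker[OF te se cd[THEN conjunct1] cd[THEN conjunct2] nz]
  note br = bracket[OF hx hy b]
  have pos: "1 - (fst (ec_double A B (Hred A B z) (to_uv z)))\<^sup>2 > 0" using b by (simp add: abs_square_less_1)
  define t where "t = fst (ec_double A B (Hred A B z) (to_uv z))"
  have "1 - t\<^sup>2 \<noteq> 0" using pos unfolding t_def by simp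
  then have "- (- 2 * (1 - t\<^sup>2)) / (1 - t\<^sup>2) = 2" by (simp add: field_simps)
  then show ?thesis using br unfolding W t_def by simp
qed

lemma case3:
  fixes A B :: real and U :: "(real \<times> real) set" and z :: "real \<times> real"
  assumes U: "open U" "z \<in> U" and sub: "U \<subseteq> {0<..<pi} \<times> UNIV"
    and hU: "\<forall>w\<in>U. snd (to_uv w) \<noteq> 0
               \<and> fst (ec_double A B (Hred A B w) (to_uv w)) \<noteq> fst (to_uv w)"
    and b: "\<bar>fst (ec_triple A B (Hred A B z) (to_uv z))\<bar> < 1"
  shows "(\<lambda>w. from_uv (ec_triple A B (Hred A B w) (to_uv w))) differentiable (at z) \<and>
    poisson (\<lambda>w. fst (from_uv (ec_triple A B (Hred A B w) (to_uv w))))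
            (\<lambda>w. snd (from_uv (ec_triple A B (Hred A B w) (to_uv w)))) z = 3"
proof -
  have th: "fst z \<in> {0<..<pi}" using sub U(2) by auto
  have snz: "sin (fst z) \<noteq> 0" using sin_pos_U[OF sub U(2)] .
  obtain e1 where hE: "HD (Hred A B) e1 (2 * snd z) z"
    and pv: "cos (fst z) * snd z * (2 * snd z) - sin (fst z) * e1 = - dfE A B (Hred A B z) (cos (fst z))"
    using HD_Hred[OF snz, of A B] by auto
  have v0: "snd (to_uv z) \<noteq> 0" using hU U(2) by auto
  define xf where "xf w = fst (ec_double A B (Hred A B w) (to_uv w))" for w
  define yf where "yf w = snd (ec_double A B (Hred A B w) (to_uv w))" for w
  obtain x1 x2 y1 y2 where hx: "HD xf x1 x2 z" and hy: "HD yf y1 y2 z"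
     and qx: "x1 * (2 * snd z) - x2 * e1 = -2 * 2 * yf z"
     and qy: "y1 * (2 * snd z) - y2 * e1 = -2 * dfE A B (Hred A B z) (xf z)"
    using dbl_data[OF th v0 hE pv] unfolding xf_def[symmetric] yf_def[symmetric] by blast
  define sn where "sn = sin (fst z)"
  define cn where "cn = cos (fst z)"
  define p where "p = snd z"
  define E where "E = Hred A B z"
  note hu = HD_cosfst[of z] and hv = HD_v[of z]
  define mf where "mf w = (sin (fst w) * snd w - yf w) / (cos (fst w) - xf w)" for w
  have nz: "cos (fst z) - xf z \<noteq> 0" using hU U(2) unfolding xf_def to_uv_def by auto
  note hm0 = HD_divide[OF HD_diff[OF hv hy] HD_diff[OF hu hx] nz]
  define m where "m = mf z"
  define x where "x = xf z"
  define y where "y = yf z"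
  define m1 where "m1 = ((cn * p - y1) - m * (- sn - x1)) / (cn - x)"
  define m2 where "m2 = ((sn - y2) - m * (0 - x2)) / (cn - x)"
  have hm: "HD mf m1 m2 z"
    by (rule HD_cong[OF hm0[folded mf_def]]) (simp_all add: m1_def m2_def m_def mf_def sn_def cn_def p_def x_def)
  define tf where "tf w = - cos (fst w) - xf w + Hred A B w + (mf w)\<^sup>2" for w
  define t where "t = tf z"
  define t1 where "t1 = - (- sn) - x1 + e1 + 2 * m * m1"
  define t2 where "t2 = - 0 - x2 + 2 * p + 2 * m * m2"
  have ht: "HD tf t1 t2 z"
    unfolding tf_def
    by (rule HD_cong[OF HD_add[OF HD_add[OF HD_diff[OF HD_minus[OF hu] hx] hE] HD_pow2[OF hm]]])
       (simp_all add: t1_def t2_def m_def sn_def p_def)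
  define sf where "sf w = - (sin (fst w) * snd w) - mf w * (tf w - cos (fst w))" for w
  define s where "s = sf z"
  define s1 where "s1 = - (cn * p) - (m1 * (t - cn) + m * (t1 - (- sn)))"
  define s2 where "s2 = - sn - (m2 * (t - cn) + m * (t2 - 0))"
  have hs: "HD sf s1 s2 z"
    unfolding sf_def
    by (rule HD_cong[OF HD_diff[OF HD_minus[OF hv] HD_mult[OF hm HD_diff[OF ht hu]]]])
       (simp_all add: s1_def s2_def m_def t_def sn_def cn_def p_def algebra_simps)
  have eG: "ec_triple A B (Hred A B w) (to_uv w) = (tf w, sf w)" for w
    unfolding ec_triple_def ec_add_def Let_def tf_def sf_def mf_def xf_def yf_def
    by (simp add: to_uv_def)
  have cu: "(sn * p)\<^sup>2 = fE A B E cn"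
    using base_on_curve[OF snz, of A B] unfolding on_curve_def to_uv_def sn_def cn_def p_def E_def by simp
  have cQ: "on_curve A B E (x, y)"
    using ec_double_on_curve[OF base_on_curve[OF snz, of A B] v0] unfolding x_def y_def xf_def yf_def E_def by simp
  have f1: "cn \<noteq> x" using nz unfolding cn_def x_def by simp
  have f3: "y\<^sup>2 = fE A B E x" using cQ unfolding on_curve_def by simp
  have f4: "- sn * (2 * p) - 0 * e1 = -2 * 1 * (sn * p)" by simp
  have f5: "cn * p * (2 * p) - sn * e1 = - 1 * dfE A B E cn" using pv unfolding cn_def sn_def p_def E_def by simp
  have f6: "x1 * (2 * p) - x2 * e1 = -2 * 2 * y" using qx unfolding p_def y_def .
  have f7: "y1 * (2 * p) - y2 * e1 = - 2 * dfE A B E x" using qy unfolding p_def x_def E_def by simp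
  have f8: "y = sn * p - m * (cn - x)"
    unfolding m_def mf_def using nz unfolding sn_def cn_def p_def x_def y_def by (simp add: field_simps)
  have f9: "m1 * (cn - x) = cn * p - y1 - m * (- sn - x1)" unfolding m1_def using f1 by simp
  have f10: "m2 * (cn - x) = sn - y2 - m * (0 - x2)" unfolding m2_def using f1 by simp
  have f11: "t = - cn - x + E + m\<^sup>2" unfolding t_def tf_def cn_def x_def E_def m_def by simp
  have f12: "t1 = - (- sn) - x1 + e1 + 2 * m * m1" unfolding t1_def ..
  have f13: "t2 = - 0 - x2 + 2 * p + 2 * m * m2" unfolding t2_def ..
  have f14: "s = - (sn * p) - m * (t - cn)" unfolding s_def sf_def t_def m_def sn_def cn_def p_def by simp
  have f15: "s1 = - (cn * p) - (m1 * (t - cn) + m * (t1 - (- sn)))" unfolding s1_def ..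
  have f16: "s2 = - sn - (m2 * (t - cn) + m * (t2 - 0))" unfolding s2_def ..
  note AW = add_wedge[OF f1 cu f3 f4 f5 f6 f7 f8 f9 f10 f11 f12 f13 f14 f15 f16]
  have curve: "(sf w)\<^sup>2 = fE A B (Hred A B w) (tf w)" if "w \<in> U" for w
  proof -
    have sw: "sin (fst w) \<noteq> 0" using sin_pos_U[OF sub that] .
    have "on_curve A B (Hred A B w) (ec_triple A B (Hred A B w) (to_uv w))"
      unfolding ec_triple_def
      by (rule ec_add_on_curve[OF base_on_curve[OF sw] ec_double_on_curve[OF base_on_curve[OF sw]]])
         (use hU that in auto)
    then show ?thesis unfolding eG on_curve_def by simp
  qed
  have cd: "2 * s * s1 = dfE A B E t * t1 + (1 - t\<^sup>2) * e1 \<and> 2 * s * s2 = dfE A B E t * t2 + (1 - t\<^sup>2) * (2 * p)"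
    using HD_eq_on_open[OF HD_pow2[OF hs] HD_fE[OF hE ht] U(1) U(2)] curve
    unfolding s_def t_def E_def p_def by auto
  have nz2: "e1 \<noteq> 0 \<or> 2 * p \<noteq> 0" using v0 unfolding to_uv_def p_def by auto
  note W = pluecker[OF AW(1) AW(2) cd[THEN conjunct1] cd[THEN conjunct2] nz2]
  have ht': "HD (\<lambda>w. fst (ec_triple A B (Hred A B w) (to_uv w))) t1 t2 z" unfolding eG using ht by simp
  have hs': "HD (\<lambda>w. snd (ec_triple A B (Hred A B w) (to_uv w))) s1 s2 z" unfolding eG using hs by simp
  note br = bracket[OF ht' hs' b]
  have tt: "fst (ec_triple A B (Hred A B z) (to_uv z)) = t" unfolding eG t_def by simp
  have "t\<^sup>2 < 1" using b unfolding tt by (simp add: abs_square_less_1)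
  then have pos: "1 - t\<^sup>2 \<noteq> 0" by simp
  then have "- (- (1 + 2) * (1 - t\<^sup>2)) / (1 - t\<^sup>2) = 3" by (simp add: field_simps)
  then show ?thesis using br unfolding tt W by simp
qed

theorem proposition1:
  fixes A B :: real
  shows
   "(\<forall>z. fst z \<in> {0<..<pi} \<longrightarrow> on_curve A B (Hred A B z) (to_uv z))
    \<and>
    (\<forall>(U :: (real \<times> real) set) (lam :: real) (mu :: real \<times> real \<Rightarrow> real).
       open U \<and> U \<subseteq> {0<..<pi} \<times> UNIV \<and>
       (\<forall>z\<in>U. (mu z)\<^sup>2 = fE A B (Hred A B z) lam \<and> mu z \<noteq> 0 \<and> mu differentiable (at z)
               \<and> fst (to_uv z) \<noteq> lam
               \<and> \<bar>fst (ec_add (Hred A B z) (to_uv z) (lam, mu z))\<bar> < 1)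
       \<longrightarrow> (let T = (\<lambda>z. from_uv (ec_add (Hred A B z) (to_uv z) (lam, mu z)))
            in canonical_valence 1 T U \<and> (\<forall>z\<in>U. Hred A B (T z) = Hred A B z)))
    \<and>
    (\<forall>U :: (real \<times> real) set.
       open U \<and> U \<subseteq> {0<..<pi} \<times> UNIV \<and>
       (\<forall>z\<in>U. snd (to_uv z) \<noteq> 0
               \<and> \<bar>fst (ec_double A B (Hred A B z) (to_uv z))\<bar> < 1)
       \<longrightarrow> (let T = (\<lambda>z. from_uv (ec_double A B (Hred A B z) (to_uv z)))
            in canonical_valence 2 T U \<and> (\<forall>z\<in>U. Hred A B (T z) = Hred A B z)))
    \<and>
    (\<forall>U :: (real \<times> real) set.
       open U \<and> U \<subseteq> {0<..<pi} \<times> UNIV \<and>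
       (\<forall>z\<in>U. snd (to_uv z) \<noteq> 0
               \<and> fst (ec_double A B (Hred A B z) (to_uv z)) \<noteq> fst (to_uv z)
               \<and> \<bar>fst (ec_triple A B (Hred A B z) (to_uv z))\<bar> < 1)
       \<longrightarrow> (let T = (\<lambda>z. from_uv (ec_triple A B (Hred A B z) (to_uv z)))
            in canonical_valence 3 T U \<and> (\<forall>z\<in>U. Hred A B (T z) = Hred A B z)))"
proof (intro conjI allI impI)
  fix z :: "real \<times> real" assume "fst z \<in> {0<..<pi}"
  then have "sin (fst z) \<noteq> 0" using sin_gt_zero by fastforce
  then show "on_curve A B (Hred A B z) (to_uv z)" by (rule base_on_curve)
next
  fix U :: "(real \<times> real) set" and lam :: real and mu :: "real \<times> real \<Rightarrow> real"
  assume h: "open U \<and> U \<subseteq> {0<..<pi} \<times> UNIV \<and>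
       (\<forall>z\<in>U. (mu z)\<^sup>2 = fE A B (Hred A B z) lam \<and> mu z \<noteq> 0 \<and> mu differentiable (at z)
               \<and> fst (to_uv z) \<noteq> lam
               \<and> \<bar>fst (ec_add (Hred A B z) (to_uv z) (lam, mu z))\<bar> < 1)"
  then have U: "open U" and sub: "U \<subseteq> {0<..<pi} \<times> UNIV" by auto
  have hmuU: "\<forall>w\<in>U. (mu w)\<^sup>2 = fE A B (Hred A B w) lam" using h by auto
  show "let T = (\<lambda>z. from_uv (ec_add (Hred A B z) (to_uv z) (lam, mu z)))
            in canonical_valence 1 T U \<and> (\<forall>z\<in>U. Hred A B (T z) = Hred A B z)"
    unfolding Let_def canonical_valence_def
  proof (rule conjI; intro ballI)
    fix z assume z: "z \<in> U"
    have th: "fst z \<in> {0<..<pi}" using sub z by auto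
    show "(\<lambda>w. from_uv (ec_add (Hred A B w) (to_uv w) (lam, mu w))) differentiable (at z) \<and>
      poisson (\<lambda>w. fst (from_uv (ec_add (Hred A B w) (to_uv w) (lam, mu w))))
              (\<lambda>w. snd (from_uv (ec_add (Hred A B w) (to_uv w) (lam, mu w)))) z = 1"
      by (rule case1[OF U z th hmuU]) (use h z in auto)
  next
    fix z assume z: "z \<in> U"
    have sw: "sin (fst z) \<noteq> 0" using sin_pos_U[OF sub z] .
    have "on_curve A B (Hred A B z) (ec_add (Hred A B z) (to_uv z) (lam, mu z))"
      by (rule ec_add_on_curve[OF base_on_curve[OF sw]]) (use h z in \<open>auto simp: on_curve_def\<close>)
    then show "Hred A B (from_uv (ec_add (Hred A B z) (to_uv z) (lam, mu z))) = Hred A B z"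
      by (rule hred_pres) (use h z in auto)
  qed
next
  fix U :: "(real \<times> real) set"
  assume h: "open U \<and> U \<subseteq> {0<..<pi} \<times> UNIV \<and>
       (\<forall>z\<in>U. snd (to_uv z) \<noteq> 0
               \<and> \<bar>fst (ec_double A B (Hred A B z) (to_uv z))\<bar> < 1)"
  then have U: "open U" and sub: "U \<subseteq> {0<..<pi} \<times> UNIV" by auto
  have hU: "\<forall>w\<in>U. snd (to_uv w) \<noteq> 0" using h by auto
  show "let T = (\<lambda>z. from_uv (ec_double A B (Hred A B z) (to_uv z)))
            in canonical_valence 2 T U \<and> (\<forall>z\<in>U. Hred A B (T z) = Hred A B z)"
    unfolding Let_def canonical_valence_def
  proof (rule conjI; intro ballI)
    fix z assume z: "z \<in> U"
    show "(\<lambda>w. from_uv (ec_double A B (Hred A B w) (to_uv w))) differentiable (at z) \<and>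
      poisson (\<lambda>w. fst (from_uv (ec_double A B (Hred A B w) (to_uv w))))
              (\<lambda>w. snd (from_uv (ec_double A B (Hred A B w) (to_uv w)))) z = 2"
      by (rule case2[OF U z sub hU]) (use h z in auto)
  next
    fix z assume z: "z \<in> U"
    have sw: "sin (fst z) \<noteq> 0" using sin_pos_U[OF sub z] .
    have "on_curve A B (Hred A B z) (ec_double A B (Hred A B z) (to_uv z))"
      by (rule ec_double_on_curve[OF base_on_curve[OF sw]]) (use h z in auto)
    then show "Hred A B (from_uv (ec_double A B (Hred A B z) (to_uv z))) = Hred A B z"
      by (rule hred_pres) (use h z in auto)
  qed
next
  fix U :: "(real \<times> real) set"
  assume h: "open U \<and> U \<subseteq> {0<..<pi} \<times> UNIV \<and>
       (\<forall>z\<in>U. snd (to_uv z) \<noteq> 0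
               \<and> fst (ec_double A B (Hred A B z) (to_uv z)) \<noteq> fst (to_uv z)
               \<and> \<bar>fst (ec_triple A B (Hred A B z) (to_uv z))\<bar> < 1)"
  then have U: "open U" and sub: "U \<subseteq> {0<..<pi} \<times> UNIV" by auto
  have hU: "\<forall>w\<in>U. snd (to_uv w) \<noteq> 0 \<and> fst (ec_double A B (Hred A B w) (to_uv w)) \<noteq> fst (to_uv w)"
    using h by auto
  show "let T = (\<lambda>z. from_uv (ec_triple A B (Hred A B z) (to_uv z)))
            in canonical_valence 3 T U \<and> (\<forall>z\<in>U. Hred A B (T z) = Hred A B z)"
    unfolding Let_def canonical_valence_def
  proof (rule conjI; intro ballI)
    fix z assume z: "z \<in> U"
    show "(\<lambda>w. from_uv (ec_triple A B (Hred A B w) (to_uv w))) differentiable (at z) \<and>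
      poisson (\<lambda>w. fst (from_uv (ec_triple A B (Hred A B w) (to_uv w))))
              (\<lambda>w. snd (from_uv (ec_triple A B (Hred A B w) (to_uv w)))) z = 3"
      by (rule case3[OF U z sub hU]) (use h z in auto)
  next
    fix z assume z: "z \<in> U"
    have sw: "sin (fst z) \<noteq> 0" using sin_pos_U[OF sub z] .
    have "on_curve A B (Hred A B z) (ec_triple A B (Hred A B z) (to_uv z))"
      unfolding ec_triple_def
      by (rule ec_add_on_curve[OF base_on_curve[OF sw] ec_double_on_curve[OF base_on_curve[OF sw]]])
         (use h z in auto)
    then show "Hred A B (from_uv (ec_triple A B (Hred A B z) (to_uv z))) = Hred A B z"
      by (rule hred_pres) (use h z in auto)
  qed
qed

end
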